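(* Let $d,n\ge 1$, let $\boldsymbol{a}_1,\ldots,\boldsymbol{a}_n\in\mathbf{R}^d$, let $w_1,\ldots,w_n>0$, fix $\varepsilon>0$ and $1\le p\le 2$. Define $\Phi(\boldsymbol{x})=\sum_{j=1}^n w_j\,(\lVert\boldsymbol{x}-\boldsymbol{a}_j\rVert^2+\varepsilon)^{p/2}$ and let $\boldsymbol{x}^\star$ be its unique global minimizer. Let $\boldsymbol{x}^{(0)}\in\mathbf{R}^d$ be arbitrary and define, for $t\ge 0$, $$\mu_j^{(t)}=w_j\,(\lVert\boldsymbol{x}^{(t)}-\boldsymbol{a}_j\rVert^2+\varepsilon)^{p/2-1},\qquad \boldsymbol{x}^{(t+1)}=\frac{\sum_j\mu_j^{(t)}\boldsymbol{a}_j}{\sum_j\mu_j^{(t)}}.$$ Then there exist a constant $\nu<1$ and $T\ge 0$ such that for all $t\ge T$, $$\Phi(\boldsymbol{x}^{(t+1)})-\Phi(\boldsymbol{x}^\star)\le\nu\big(\Phi(\boldsymbol{x}^{(t)})-\Phi(\boldsymbol{x}^\star)\big).$$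
   Context: $\lVert\cdot\rVert$ is the Euclidean norm on $\mathbf{R}^d$. *)

theory Defs
  imports "HOL-Analysis.Analysis"
begin

definition Phi :: "nat \<Rightarrow> (nat \<Rightarrow> real) \<Rightarrow> (nat \<Rightarrow> 'a::euclidean_space) \<Rightarrow> real \<Rightarrow> real \<Rightarrow> 'a \<Rightarrow> real" where
  "Phi n w a eps p x = (\<Sum>j<n. w j * (norm (x - a j) ^ 2 + eps) powr (p / 2))"

definition irls_mu :: "(nat \<Rightarrow> real) \<Rightarrow> (nat \<Rightarrow> 'a::euclidean_space) \<Rightarrow> real \<Rightarrow> real \<Rightarrow> 'a \<Rightarrow> nat \<Rightarrow> real" where
  "irls_mu w a eps p x j = w j * (norm (x - a j) ^ 2 + eps) powr (p / 2 - 1)"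

end

theory Submission
  imports Defs
begin


lemma powr_tangent:
  fixes A B s :: real
  assumes "0 < A" "0 < B" "0 \<le> s" "s \<le> 1"
  shows "B powr s \<le> A powr s + s * A powr (s-1) * (B - A)"
proof -
  have y: "A powr (1-s) * B powr s \<le> (1-s)*A + s*B"
    using Youngs_inequality_0[of "1-s" s A B] assms by auto
  have pos: "A powr (s-1) > 0" using assms by simp
  have "A powr (s-1) * (A powr (1-s) * B powr s) \<le> A powr (s-1) * ((1-s)*A + s*B)"
    using y pos by (simp add: mult_left_mono)
  have one: "A powr (s-1) * A powr (1-s) = 1" using assms by (simp add: powr_add[symmetric])
  have AA: "A powr (s-1) * A = A powr s"
    using assms powr_add[of A "s-1" 1] by simp
  have "B powr s = A powr (s-1) * (A powr (1-s) * B powr s)"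
    by (metis one mult.assoc mult_1)
  also have "\<dots> \<le> A powr (s-1) * ((1-s)*A + s*B)" by fact
  also have "\<dots> = (1-s) * (A powr (s-1) * A) + s * A powr (s-1) * B" by (simp add: algebra_simps)
  also have "\<dots> = A powr s + s * A powr (s-1) * (B - A)"
  proof -
    have X: "s * A powr (s-1) * (B - A) = s * A powr (s-1) * B - s * A powr s"
      using AA by (simp add: right_diff_distrib mult.assoc)
    show ?thesis unfolding X AA by (simp add: algebra_simps)
  qed
  finally show ?thesis .
qed

lemma quad_pos_lemma:
  fixes b c eps a t :: real
  assumes "b^2 \<le> 4*c*(a-eps)"
  shows "(b + 2*c*t)^2 \<le> 4*c*((a + b*t + c*t^2) - eps)"
proof -
  have "(b + 2*c*t)^2 = b^2 + 4*c*b*t + 4*c^2*t^2" by (simp add: power2_eq_square algebra_simps)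
  thus ?thesis using assms by (simp add: power2_eq_square algebra_simps)
qed

lemma scal:
  fixes a b c eps s Q :: real
  assumes eps: "eps > 0" and s1: "1/2 \<le> s" and s2: "s \<le> 1" and c: "c \<ge> 0"
    and disc: "b^2 \<le> 4*c*(a-eps)" and ae: "eps \<le> a" and aQ: "a \<le> Q" and abcQ: "a+b+c \<le> Q"
  shows "a powr s + s * a powr (s-1) * b + s*eps*Q powr (s-2) * c \<le> (a+b+c) powr s"
proof -
  define q where "q t = a + b*t + c*t^2" for t
  have key: "(b + 2*c*t)^2 \<le> 4*c*(q t - eps)" for t
    unfolding q_def by (rule quad_pos_lemma[OF disc])
  have qlo: "eps \<le> q t" for t
  proof (cases "c = 0")
    case True
    then have "b = 0" using disc by simp
    then show ?thesis using True ae by (simp add: q_def)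
  next
    case False
    then have "c > 0" using c by simp
    moreover have "0 \<le> 4*c*(q t - eps)" using key[of t] by (meson order_trans zero_le_power2)
    ultimately show ?thesis by (simp add: zero_le_mult_iff)
  qed
  have qpos: "q t > 0" for t using qlo[of t] eps by linarith
  have qhi: "q t \<le> Q" if "0 \<le> t" "t \<le> 1" for t
  proof -
    have "q t = (1-t)*a + t*(a+b+c) - c*t*(1-t)" by (simp add: q_def power2_eq_square algebra_simps)
    moreover have "c*t*(1-t) \<ge> 0" using that c by simp
    moreover have "(1-t)*a \<le> (1-t)*Q" using that aQ by (simp add: mult_left_mono)
    moreover have "t*(a+b+c) \<le> t*Q" using that abcQ by (simp add: mult_left_mono)
    ultimately show ?thesis by (simp add: algebra_simps)
  qed
  define kk where "kk = 2* s*eps*(Q powr (s-2))"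
  define g1 where "g1 t = s * q t powr (s-1) * (b + 2*c*t)" for t
  define g2 where "g2 t = s*(s-1)*q t powr (s-2)*(b+2*c*t)^2 + s*q t powr (s-1)*(2*c)" for t
  have dq: "(q has_real_derivative (b + 2*c*t)) (at t)" for t
    unfolding q_def by (auto intro!: derivative_eq_intros simp: power2_eq_square)
  have dqr: "((\<lambda>t. q t powr r) has_real_derivative r * q t powr (r-1) * (b+2*c*t)) (at t)" for t r
  proof -
    have h1: "((\<lambda>z. z powr r) has_real_derivative r * q t powr (r-1)) (at (q t))"
      by (rule has_real_derivative_powr) (rule qpos)
    show ?thesis using DERIV_chain2[OF h1 dq[of t]] by (simp add: mult.assoc)
  qed
  have dg1: "(g1 has_real_derivative g2 t) (at t)" for t
  proof -
    have d2: "((\<lambda>t. b+2*c*t) has_real_derivative 2*c) (at t)" by (auto intro!: derivative_eq_intros)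
    have D: "((\<lambda>t. s * (q t powr (s-1) * (b+2*c*t))) has_real_derivative
       s * ((s-1) * q t powr (s-1-1) * (b+2*c*t) * (b+2*c*t) + 2*c * q t powr (s-1))) (at t)"
      by (rule DERIV_cmult[OF DERIV_mult[OF dqr[where t=t and r="s-1"] d2]])
    have "s * ((s-1) * q t powr (s-1-1) * (b+2*c*t) * (b+2*c*t) + 2*c * q t powr (s-1)) = g2 t"
      by (simp add: g2_def power2_eq_square algebra_simps)
    moreover have "g1 = (\<lambda>t. s * (q t powr (s-1) * (b+2*c*t)))" by (auto simp: g1_def fun_eq_iff)
    ultimately show ?thesis using D by simp
  qed
  have g2k: "kk*c \<le> g2 t" if "0 \<le> t" "t \<le> 1" for t
  proof -
    have e1: "q t powr (s-1) = q t powr (s-2) * q t"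
      using qpos[of t] powr_add[of "q t" "s-2" 1] by simp
    have P: "q t powr (s-2) > 0" using qpos[of t] by simp
    have "(s-1)*(b+2*c*t)^2 \<ge> (s-1)*(4*c*(q t - eps))"
      using key[of t] s2 by (simp add: mult_left_mono_neg)
    hence br: "(s-1)*(b+2*c*t)^2 + 2*c*q t \<ge> 2*c*eps"
    proof -
      assume h: "(s-1)*(b+2*c*t)^2 \<ge> (s-1)*(4*c*(q t - eps))"
      have "(s-1)*(4*c*(q t - eps)) + 2*c*q t - 2*c*eps = c*(4* s-2)*(q t - eps)"
        by (simp add: algebra_simps)
      moreover have "c*(4* s-2)*(q t - eps) \<ge> 0" using c s1 qlo[of t] by simp
      ultimately show ?thesis using h by linarith
    qed
    have "g2 t = s * q t powr (s-2) * ((s-1)*(b+2*c*t)^2 + 2*c*q t)"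
      unfolding g2_def e1 by (simp add: algebra_simps)
    also have "\<dots> \<ge> s * q t powr (s-2) * (2*c*eps)"
      using br P s1 by (intro mult_left_mono) auto
    finally have A: "g2 t \<ge> s * q t powr (s-2) * (2*c*eps)" .
    have "Q powr (s-2) \<le> q t powr (s-2)" using powr_mono2'[of "s-2" "q t" Q] qpos qhi that s2 by simp
    hence "s * Q powr (s-2) * (2*c*eps) \<le> s * q t powr (s-2) * (2*c*eps)"
      using s1 c eps by (intro mult_right_mono mult_left_mono) auto
    with A show ?thesis unfolding kk_def by (simp add: algebra_simps)
  qed
  define e1 where "e1 t = g1 t - g1 0 - kk*c*t" for t
  have e1pos: "0 \<le> e1 t" if "0 \<le> t" "t \<le> 1" for t
  proof -
    have "e1 0 \<le> e1 t"
    proof (rule DERIV_nonneg_imp_nondecreasing[of 0 t e1, OF that(1)])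
      fix x assume "0 \<le> x" "x \<le> t"
      have "(e1 has_real_derivative g2 x - kk*c) (at x)"
        unfolding e1_def by (auto intro!: derivative_eq_intros dg1)
      moreover have "g2 x - kk*c \<ge> 0" using g2k[of x] \<open>0 \<le> x\<close> \<open>x \<le> t\<close> that by simp
      ultimately show "\<exists>y. (e1 has_real_derivative y) (at x) \<and> y \<ge> 0" by blast
    qed
    thus ?thesis by (simp add: e1_def)
  qed
  define e where "e t = q t powr s - a powr s - g1 0 * t - kk*c*t^2/2" for t
  have "e 0 \<le> e 1"
  proof (rule DERIV_nonneg_imp_nondecreasing[of 0 1 e])
    fix x :: real assume x: "0 \<le> x" "x \<le> 1"
    have D2: "((\<lambda>t. a powr s + g1 0 * t + kk*c*t^2/2) has_real_derivative g1 0 + kk*c*x) (at x)"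
      by (auto intro!: derivative_eq_intros simp: power2_eq_square)
    have ee: "e = (\<lambda>t. q t powr s - (a powr s + g1 0 * t + kk*c*t^2/2))" by (simp add: e_def fun_eq_iff)
    have "(e has_real_derivative s * q x powr (s-1) * (b+2*c*x) - (g1 0 + kk*c*x)) (at x)"
      unfolding ee by (rule DERIV_diff[OF dqr[where t=x and r=s] D2])
    moreover have "s * q x powr (s-1) * (b+2*c*x) - (g1 0 + kk*c*x) = e1 x"
      by (simp add: e1_def g1_def)
    ultimately have DD: "(e has_real_derivative e1 x) (at x)" by simp
    show "\<exists>y. (e has_real_derivative y) (at x) \<and> y \<ge> 0"
    proof (intro exI conjI)
      show "(e has_real_derivative e1 x) (at x)" by (rule DD)
      show "e1 x \<ge> 0" by (rule e1pos[OF x])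
    qed
  qed simp
  moreover have "e 0 = 0" by (simp add: e_def q_def)
  moreover have "q 1 = a+b+c" by (simp add: q_def)
  moreover have "g1 0 = s * a powr (s-1) * b" by (simp add: g1_def q_def)
  moreover have "kk*c*1^2/2 = s*eps*Q powr (s-2) * c" by (simp add: kk_def)
  moreover have "e 1 = q 1 powr s - a powr s - g1 0 * 1 - kk*c*1^2/2" by (simp only: e_def)
  ultimately have "e 1 = (a+b+c) powr s - a powr s - s * a powr (s-1) * b - s*eps*Q powr (s-2) * c"
    by simp
  with \<open>e 0 \<le> e 1\<close> \<open>e 0 = 0\<close> show ?thesis by linarith
qed



lemma wsum_sq:
  fixes mu :: "nat \<Rightarrow> real" and a :: "nat \<Rightarrow> 'a::real_inner"
  shows "(\<Sum>j<n. mu j * norm (z - a j)^2) =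
     (\<Sum>j<n. mu j) * norm z ^2 - 2 * inner z (\<Sum>j<n. mu j *\<^sub>R a j) + (\<Sum>j<n. mu j * norm (a j)^2)"
proof -
  have "mu j * norm (z - a j)^2 = mu j * norm z^2 - 2 * inner z (mu j *\<^sub>R a j) + mu j * norm (a j)^2" for j
    by (simp add: power2_norm_eq_inner inner_diff_left inner_diff_right inner_commute algebra_simps)
  then have "(\<Sum>j<n. mu j * norm (z - a j)^2) = (\<Sum>j<n. mu j * norm z^2 - 2 * inner z (mu j *\<^sub>R a j) + mu j * norm (a j)^2)"
    by simp
  also have "\<dots> = (\<Sum>j<n. mu j) * norm z ^2 - 2 * inner z (\<Sum>j<n. mu j *\<^sub>R a j) + (\<Sum>j<n. mu j * norm (a j)^2)"
    by (simp add: sum.distrib sum_subtractf sum_distrib_left sum_distrib_right inner_sum_right)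
  finally show ?thesis .
qed

lemma wsum_sq_diff:
  fixes mu :: "nat \<Rightarrow> real" and a :: "nat \<Rightarrow> 'a::real_inner"
  assumes "(\<Sum>j<n. mu j *\<^sub>R a j) = (\<Sum>j<n. mu j) *\<^sub>R v"
  shows "(\<Sum>j<n. mu j * norm (v - a j)^2) - (\<Sum>j<n. mu j * norm (x - a j)^2) = - (\<Sum>j<n. mu j) * norm (x - v)^2"
  unfolding wsum_sq[of mu _ a n] assms
  by (simp add: power2_norm_eq_inner inner_diff_left inner_diff_right inner_commute algebra_simps)

lemma wsum_inner:
  fixes mu :: "nat \<Rightarrow> real" and a :: "nat \<Rightarrow> 'a::real_inner"
  assumes "(\<Sum>j<n. mu j *\<^sub>R a j) = (\<Sum>j<n. mu j) *\<^sub>R v"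
  shows "(\<Sum>j<n. mu j * inner (x - a j) h) = (\<Sum>j<n. mu j) * inner (x - v) h"
proof -
  have "(\<Sum>j<n. mu j * inner (x - a j) h) = (\<Sum>j<n. mu j * inner x h - inner (mu j *\<^sub>R a j) h)"
    by (simp add: inner_diff_left algebra_simps)
  also have "\<dots> = (\<Sum>j<n. mu j) * inner x h - inner (\<Sum>j<n. mu j *\<^sub>R a j) h"
    by (simp add: sum_subtractf sum_distrib_right inner_sum_left)
  also have "\<dots> = (\<Sum>j<n. mu j) * inner (x - v) h" unfolding assms
    by (simp add: inner_diff_left algebra_simps)
  finally show ?thesis .
qed

lemma sum_lin_aux:
  fixes A B C :: "nat \<Rightarrow> real"
  shows "(\<Sum>j<n. A j + c * (B j - C j)) = (\<Sum>j<n. A j) + c * ((\<Sum>j<n. B j) - (\<Sum>j<n. C j))"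
proof -
  have "(\<Sum>j<n. c * (B j - C j)) = c * (\<Sum>j<n. B j - C j)" by (simp add: sum_distrib_left)
  then show ?thesis by (simp add: sum.distrib sum_subtractf)
qed

lemma lin_aux2:
  fixes w X P I K C p :: real
  shows "w * (X + (p/2)*P*(2*I) + K*C) = w*X + p*((w*P)*I) + K*w*C"
  by (simp add: field_simps)

lemma cs_aux:
  fixes t N H eps :: real
  assumes "\<bar>t\<bar> \<le> N * H" "0 \<le> N" "0 \<le> H"
  shows "(2*t)^2 \<le> 4 * H^2 * ((N^2 + eps) - eps)"
proof -
  have "\<bar>t\<bar>^2 \<le> (N*H)^2" using assms by (intro power_mono) auto
  then show ?thesis by (simp add: power_mult_distrib algebra_simps)
qed

lemma norm_add_sq:
  fixes u h :: "'a::real_inner"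
  shows "norm (u + h)^2 = norm u^2 + 2 * inner u h + norm h^2"
  by (simp add: power2_norm_eq_inner inner_add_left inner_add_right inner_commute)

lemma norm_split_sq:
  fixes x y c :: "'a::real_inner"
  shows "norm (y - c)^2 = norm (x - c)^2 + 2 * inner (x - c) (y - x) + norm (y - x)^2"
proof -
  have "y - c = (x - c) + (y - x)" by simp
  then show ?thesis using norm_add_sq[of "x - c" "y - x"] by metis
qed

lemma descent:
  fixes a :: "nat \<Rightarrow> 'a::euclidean_space"
  assumes w: "\<And>j. j<n \<Longrightarrow> w j > 0" and eps: "eps > 0" and p1: "1 \<le> p" and p2: "p \<le> 2"
    and n: "n \<ge> 1"
  shows "Phi n w a eps p ((\<Sum>j<n. irls_mu w a eps p x j *\<^sub>R a j) /\<^sub>R (\<Sum>j<n. irls_mu w a eps p x j))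
      \<le> Phi n w a eps p x - (p/2) * (\<Sum>j<n. irls_mu w a eps p x j)
          * norm (x - (\<Sum>j<n. irls_mu w a eps p x j *\<^sub>R a j) /\<^sub>R (\<Sum>j<n. irls_mu w a eps p x j))^2"
proof -
  define mu where "mu = irls_mu w a eps p x"
  define M where "M = (\<Sum>j<n. mu j)"
  define v where "v = (\<Sum>j<n. mu j *\<^sub>R a j) /\<^sub>R M"
  have mupos: "mu j > 0" if "j < n" for j
  proof -
    have b: "0 < norm (x - a j)^2 + eps" using eps by (simp add: add_nonneg_pos)
    have "0 < (norm (x - a j)^2 + eps) powr (p/2-1)" using b by simp
    then show ?thesis using w[OF that] by (simp add: mu_def irls_mu_def)
  qed
  have Mpos: "M > 0" unfolding M_def using n mupos by (intro sum_pos) (auto simp: lessThan_empty_iff)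
  have S: "(\<Sum>j<n. mu j *\<^sub>R a j) = M *\<^sub>R v" using Mpos by (simp add: v_def)
  have termj: "w j * (norm (v - a j)^2 + eps) powr (p/2) \<le> w j * (norm (x - a j)^2 + eps) powr (p/2)
      + (p/2) * (mu j * norm (v - a j)^2 - mu j * norm (x - a j)^2)" if "j < n" for j
  proof -
    have A: "0 < norm (x - a j)^2 + eps" using eps by (simp add: add_nonneg_pos)
    have B: "0 < norm (v - a j)^2 + eps" using eps by (simp add: add_nonneg_pos)
    have t: "(norm (v - a j)^2 + eps) powr (p/2) \<le> (norm (x - a j)^2 + eps) powr (p/2)
      + (p/2) * (norm (x - a j)^2 + eps) powr (p/2-1) * ((norm (v - a j)^2 + eps) - (norm (x - a j)^2 + eps))"
      using powr_tangent[OF A B, of "p/2"] p1 p2 by simp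
    have "w j * (norm (v - a j)^2 + eps) powr (p/2) \<le> w j * ((norm (x - a j)^2 + eps) powr (p/2)
      + (p/2) * (norm (x - a j)^2 + eps) powr (p/2-1) * ((norm (v - a j)^2 + eps) - (norm (x - a j)^2 + eps)))"
      using t w[OF that] by (simp add: mult_left_mono)
    also have "\<dots> = w j * (norm (x - a j)^2 + eps) powr (p/2)
      + (p/2) * (mu j * norm (v - a j)^2 - mu j * norm (x - a j)^2)"
      by (simp add: mu_def irls_mu_def field_simps)
    finally show ?thesis .
  qed
  have "Phi n w a eps p v \<le> (\<Sum>j<n. w j * (norm (x - a j)^2 + eps) powr (p/2)
      + (p/2) * (mu j * norm (v - a j)^2 - mu j * norm (x - a j)^2))"
    unfolding Phi_def by (rule sum_mono) (use termj in auto)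
  also have "\<dots> = Phi n w a eps p x + (p/2) * ((\<Sum>j<n. mu j * norm (v - a j)^2) - (\<Sum>j<n. mu j * norm (x - a j)^2))"
    unfolding Phi_def by (rule sum_lin_aux)
  also have "\<dots> = Phi n w a eps p x - (p/2) * M * norm (x - v)^2"
    using wsum_sq_diff[OF S[unfolded M_def], of x] by (simp add: M_def)
  finally show ?thesis by (simp add: v_def M_def mu_def)
qed

lemma lower:
  fixes a :: "nat \<Rightarrow> 'a::euclidean_space"
  assumes w: "\<And>j. j<n \<Longrightarrow> w j > 0" and eps: "eps > 0" and p1: "1 \<le> p" and p2: "p \<le> 2"
    and n: "n \<ge> 1"
    and Qx: "\<And>j. j<n \<Longrightarrow> norm (x - a j)^2 + eps \<le> Q"
    and Qy: "\<And>j. j<n \<Longrightarrow> norm (y - a j)^2 + eps \<le> Q"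
  shows "Phi n w a eps p x + p * (\<Sum>j<n. irls_mu w a eps p x j)
       * inner (x - (\<Sum>j<n. irls_mu w a eps p x j *\<^sub>R a j) /\<^sub>R (\<Sum>j<n. irls_mu w a eps p x j)) (y - x)
      + (p/2)*eps*Q powr (p/2-2) * (\<Sum>j<n. w j) * norm (y - x)^2 \<le> Phi n w a eps p y"
proof -
  define mu where "mu = irls_mu w a eps p x"
  define M where "M = (\<Sum>j<n. mu j)"
  define v where "v = (\<Sum>j<n. mu j *\<^sub>R a j) /\<^sub>R M"
  define k where "k = (p/2)*eps*Q powr (p/2-2)"
  have mupos: "mu j > 0" if "j < n" for j
  proof -
    have b: "0 < norm (x - a j)^2 + eps" using eps by (simp add: add_nonneg_pos)
    have "0 < (norm (x - a j)^2 + eps) powr (p/2-1)" using b by simp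
    then show ?thesis using w[OF that] by (simp add: mu_def irls_mu_def)
  qed
  have Mpos: "M > 0" unfolding M_def using n mupos by (intro sum_pos) (auto simp: lessThan_empty_iff)
  have S: "(\<Sum>j<n. mu j *\<^sub>R a j) = M *\<^sub>R v" using Mpos by (simp add: v_def)
  have termj: "w j * (norm (x - a j)^2 + eps) powr (p/2) + p * (mu j * inner (x - a j) (y - x))
      + k * w j * norm (y - x)^2 \<le> w j * (norm (y - a j)^2 + eps) powr (p/2)" if "j < n" for j
  proof -
    have cs: "(2 * inner (x - a j) (y - x))^2 \<le> 4 * norm (y - x)^2 * ((norm (x - a j)^2 + eps) - eps)"
      using cs_aux[OF Cauchy_Schwarz_ineq2[of "x - a j" "y - x"], of eps] by simp
    have Qs: "(norm (x - a j)^2 + eps) + 2 * inner (x - a j) (y - x) + norm (y - x)^2 \<le> Q"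
      using Qy[OF that] norm_split_sq[of y "a j" x] by simp
    have E: "(norm (x - a j)^2 + eps) + 2 * inner (x - a j) (y - x) + norm (y - x)^2 = norm (y - a j)^2 + eps"
      using norm_split_sq[of y "a j" x] by simp
    note sc = scal[OF eps _ _ _ cs _ Qx[OF that] Qs, of "p/2", unfolded E]
    have sc': "(norm (x - a j)^2 + eps) powr (p/2) + (p/2) * (norm (x - a j)^2 + eps) powr (p/2-1) * (2 * inner (x - a j) (y - x))
       + (p/2)*eps*Q powr (p/2-2) * norm (y - x)^2 \<le> (norm (y - a j)^2 + eps) powr (p/2)"
      using sc p1 p2 eps norm_split_sq[of y "a j" x] by (simp add: add.assoc)
    have "w j * ((norm (x - a j)^2 + eps) powr (p/2) + (p/2) * (norm (x - a j)^2 + eps) powr (p/2-1) * (2 * inner (x - a j) (y - x))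
       + (p/2)*eps*Q powr (p/2-2) * norm (y - x)^2) \<le> w j * (norm (y - a j)^2 + eps) powr (p/2)"
      using sc' w[OF that] by (simp add: mult_left_mono)
    moreover have "w j * ((norm (x - a j)^2 + eps) powr (p/2) + (p/2) * (norm (x - a j)^2 + eps) powr (p/2-1) * (2 * inner (x - a j) (y - x))
       + (p/2)*eps*Q powr (p/2-2) * norm (y - x)^2) = w j * (norm (x - a j)^2 + eps) powr (p/2) + p * (mu j * inner (x - a j) (y - x))
      + k * w j * norm (y - x)^2"
      unfolding mu_def irls_mu_def k_def by (rule lin_aux2)
    ultimately show ?thesis by simp
  qed
  have "(\<Sum>j<n. w j * (norm (x - a j)^2 + eps) powr (p/2) + p * (mu j * inner (x - a j) (y - x))
      + k * w j * norm (y - x)^2) \<le> Phi n w a eps p y"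
    unfolding Phi_def by (rule sum_mono) (use termj in auto)
  moreover have "(\<Sum>j<n. w j * (norm (x - a j)^2 + eps) powr (p/2) + p * (mu j * inner (x - a j) (y - x))
      + k * w j * norm (y - x)^2) = Phi n w a eps p x + p * (\<Sum>j<n. mu j * inner (x - a j) (y - x))
      + k * (\<Sum>j<n. w j) * norm (y - x)^2"
    by (simp add: Phi_def sum.distrib sum_distrib_left sum_distrib_right)
  moreover have "(\<Sum>j<n. mu j * inner (x - a j) (y - x)) = M * inner (x - v) (y - x)"
    using wsum_inner[OF S[unfolded M_def], of x "y - x"] by (simp add: M_def)
  ultimately show ?thesis by (simp add: v_def M_def mu_def k_def mult.assoc)
qed

lemma combine:
  fixes P1 Px Py p M Mm m G H X :: real
  assumes p: "p > 0" and M: "M > 0" and MM: "M \<le> Mm" and m: "m > 0" and D0: "Py \<le> Px"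
    and desc: "P1 \<le> Px - (p/2) * M * G^2"
    and low: "Px + p * M * X + m * H^2 \<le> Py"
    and cs: "\<bar>X\<bar> \<le> G * H" and G: "G \<ge> 0" and H: "H \<ge> 0"
  shows "P1 - Py \<le> (1 - m / ((p/2) * Mm)) * (Px - Py)"
proof -
  define D where "D = Px - Py"
  define r where "r = p/2"
  have r: "r > 0" using p by (simp add: r_def)
  have D: "D \<ge> 0" using D0 by (simp add: D_def)
  have "- X \<le> G * H" using cs by linarith
  then have "p * M * (- X) \<le> p * M * (G * H)" using p M by (intro mult_left_mono) auto
  then have d1: "D \<le> 2*r*M*G*H - m*H^2" using low by (simp add: D_def r_def algebra_simps)
  have "0 \<le> (r*M*G - m*H)^2" by simp
  then have "m * (2*r*M*G*H - m*H^2) \<le> (r*M*G)^2" by (simp add: power2_eq_square algebra_simps)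
  then have "m * D \<le> (r*M*G)^2" using d1 m by (meson mult_left_mono order_trans less_imp_le)
  then have "m * D \<le> (r*M) * (r*M*G^2)" by (simp add: power2_eq_square algebra_simps)
  then have e1: "m * D / (r*M) \<le> r*M*G^2" using r M by (simp add: pos_divide_le_eq mult.commute)
  have "m * D / (r*Mm) \<le> m * D / (r*M)"
    using r M MM m D by (intro divide_left_mono mult_left_mono mult_pos_pos) auto
  with e1 have e2: "m * D / (r*Mm) \<le> r*M*G^2" by linarith
  have "P1 - Py \<le> D - r*M*G^2" using desc by (simp add: D_def r_def)
  also have "\<dots> \<le> D - m * D / (r*Mm)" using e2 by linarith
  also have "\<dots> = (1 - m / (r*Mm)) * D" by (simp add: algebra_simps)
  finally show ?thesis by (simp add: D_def r_def)
qed

lemma Qbound: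
  fixes a :: "nat \<Rightarrow> 'a::euclidean_space"
  assumes w: "\<And>j. j<n \<Longrightarrow> w j > 0" and eps: "eps > 0" and p1: "1 \<le> p"
    and j: "j < n" and y: "Phi n w a eps p y \<le> P0"
  shows "norm (y - a j)^2 + eps \<le> (\<Sum>i<n. (P0 / w i) powr (2/p))"
proof -
  define u where "u = norm (y - a j)^2 + eps"
  have u: "u > 0" using eps by (simp add: u_def add_nonneg_pos)
  have "w j * u powr (p/2) \<le> Phi n w a eps p y"
    unfolding Phi_def u_def
    by (rule member_le_sum[where f = "\<lambda>i. w i * (norm (y - a i)^2 + eps) powr (p/2)"])
       (use j w in \<open>auto intro!: mult_nonneg_nonneg intro: less_imp_le\<close>)
  with y have "w j * u powr (p/2) \<le> P0" by linarith
  then have up: "u powr (p/2) \<le> P0 / w j" using w[OF j] by (simp add: pos_le_divide_eq mult.commute)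
  have "u = (u powr (p/2)) powr (2/p)" using u p1 by (simp add: powr_powr)
  also have "\<dots> \<le> (P0 / w j) powr (2/p)" using up p1 by (intro powr_mono2) auto
  also have "\<dots> \<le> (\<Sum>i<n. (P0 / w i) powr (2/p))"
    by (rule member_le_sum[where f = "\<lambda>i. (P0 / w i) powr (2/p)"]) (use j in auto)
  finally show ?thesis by (simp add: u_def)
qed

theorem proposition6:
  fixes n :: nat and a :: "nat \<Rightarrow> 'a::euclidean_space" and w :: "nat \<Rightarrow> real"
    and eps p :: real and xstar :: 'a and x :: "nat \<Rightarrow> 'a"
  assumes "n \<ge> 1"
    and "\<And>j. j < n \<Longrightarrow> w j > 0"
    and "eps > 0" and "1 \<le> p" and "p \<le> 2"
    and "\<And>y. Phi n w a eps p xstar \<le> Phi n w a eps p y"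
    and "\<And>t. x (Suc t) = (\<Sum>j<n. irls_mu w a eps p (x t) j *\<^sub>R a j) /\<^sub>R (\<Sum>j<n. irls_mu w a eps p (x t) j)"
  shows "\<exists>\<nu><1. \<exists>T. \<forall>t\<ge>T.
           Phi n w a eps p (x (Suc t)) - Phi n w a eps p xstar
             \<le> \<nu> * (Phi n w a eps p (x t) - Phi n w a eps p xstar)"
proof -
  note n = assms(1) and w = assms(2) and eps = assms(3) and p1 = assms(4) and p2 = assms(5)
    and opt = assms(6) and it = assms(7)
  define P0 where "P0 = Phi n w a eps p (x 0)"
  define Q where "Q = (\<Sum>i<n. (P0 / w i) powr (2/p))"
  define W where "W = (\<Sum>j<n. w j)"
  define Mm where "Mm = W * eps powr (p/2-1)"
  define m where "m = (p/2)*eps*Q powr (p/2-2) * W"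
  define M where "M t = (\<Sum>j<n. irls_mu w a eps p (x t) j)" for t
  have mupos: "irls_mu w a eps p z j > 0" if "j < n" for j z
  proof -
    have b: "0 < norm (z - a j)^2 + eps" using eps by (simp add: add_nonneg_pos)
    have "0 < (norm (z - a j)^2 + eps) powr (p/2-1)" using b by simp
    then show ?thesis using w[OF that] by (simp add: irls_mu_def)
  qed
  have Mpos: "M t > 0" for t unfolding M_def using n mupos by (intro sum_pos) (auto simp: lessThan_empty_iff)
  have Wpos: "W > 0" unfolding W_def using n w by (intro sum_pos) (auto simp: lessThan_empty_iff)
  have desc: "Phi n w a eps p (x (Suc t)) \<le> Phi n w a eps p (x t) - (p/2) * M t * norm (x t - x (Suc t))^2" for t
    using descent[OF w eps p1 p2 n, where a=a and x="x t"] unfolding it[of t] M_def by simp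
  have mono: "Phi n w a eps p (x (Suc t)) \<le> Phi n w a eps p (x t)" for t
  proof -
    have "0 \<le> (p/2) * M t * norm (x t - x (Suc t))^2" using Mpos[of t] p1 by simp
    with desc[of t] show ?thesis by linarith
  qed
  have bnd: "Phi n w a eps p (x t) \<le> P0" for t
  proof (induction t)
    case 0 then show ?case by (simp add: P0_def)
  next
    case (Suc t) then show ?case using mono[of t] by linarith
  qed
  have bstar: "Phi n w a eps p xstar \<le> P0" using opt[of "x 0"] by (simp add: P0_def)
  have Qx: "norm (x t - a j)^2 + eps \<le> Q" if "j < n" for t j
    unfolding Q_def by (rule Qbound[OF w eps p1 that bnd])
  have Qs: "norm (xstar - a j)^2 + eps \<le> Q" if "j < n" for j
    unfolding Q_def by (rule Qbound[OF w eps p1 that bstar])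
  have Qpos: "Q > 0"
  proof -
    have "0 < norm (xstar - a 0)^2 + eps" using eps by (simp add: add_nonneg_pos)
    then show ?thesis using Qs[of 0] n by linarith
  qed
  have mpos: "m > 0" unfolding m_def using p1 eps Qpos Wpos by simp
  have MM: "M t \<le> Mm" for t
  proof -
    have "irls_mu w a eps p (x t) j \<le> w j * eps powr (p/2-1)" if "j < n" for j
    proof -
      have "(norm (x t - a j)^2 + eps) powr (p/2-1) \<le> eps powr (p/2-1)"
        using powr_mono2'[of "p/2-1" eps "norm (x t - a j)^2 + eps"] p2 eps by simp
      then show ?thesis unfolding irls_mu_def using w[OF that] by (simp add: mult_left_mono)
    qed
    then have "M t \<le> (\<Sum>j<n. w j * eps powr (p/2-1))" unfolding M_def by (intro sum_mono) auto
    also have "\<dots> = Mm" by (simp add: Mm_def W_def sum_distrib_right)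
    finally show ?thesis .
  qed
  have step: "Phi n w a eps p (x (Suc t)) - Phi n w a eps p xstar
             \<le> (1 - m / ((p/2) * Mm)) * (Phi n w a eps p (x t) - Phi n w a eps p xstar)" for t
  proof (rule combine[where M = "M t" and G = "norm (x t - x (Suc t))" and H = "norm (xstar - x t)"
        and X = "inner (x t - x (Suc t)) (xstar - x t)"])
    show "p > 0" using p1 by simp
    show "M t > 0" by (rule Mpos)
    show "M t \<le> Mm" by (rule MM)
    show "m > 0" by (rule mpos)
    show "Phi n w a eps p xstar \<le> Phi n w a eps p (x t)" by (rule opt)
    show "Phi n w a eps p (x (Suc t)) \<le> Phi n w a eps p (x t) - (p/2) * M t * (norm (x t - x (Suc t)))^2"
      by (rule desc)
    show "Phi n w a eps p (x t) + p * M t * inner (x t - x (Suc t)) (xstar - x t) + m * (norm (xstar - x t))^2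
        \<le> Phi n w a eps p xstar"
      using lower[where w=w and a=a and x="x t" and y=xstar and Q=Q and n=n and eps=eps and p=p, OF w eps p1 p2 n Qx Qs] unfolding it[of t] M_def m_def W_def by simp
    show "\<bar>inner (x t - x (Suc t)) (xstar - x t)\<bar> \<le> norm (x t - x (Suc t)) * norm (xstar - x t)"
      by (rule Cauchy_Schwarz_ineq2)
  qed auto
  have "1 - m / ((p/2) * Mm) < 1"
  proof -
    have "Mm > 0" unfolding Mm_def using Wpos eps by simp
    then have "m / ((p/2) * Mm) > 0" using mpos p1 by simp
    then show ?thesis by linarith
  qed
  then show ?thesis using step by blast
qed

end
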